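(* Let $\Delta$ be the root system of a simple complex Lie algebra, with positive roots $\Delta^+$, simple roots $\Pi$ and highest root $\theta$. Let $\alpha\in\Pi$ be such that $\mathrm{ht}_\alpha(\theta)=2d_\alpha+1$ is odd. Then $\bigcup_{j\ge d_\alpha+1}\Delta_\alpha(j)$ is a maximal abelian (upper) ideal of $\Delta^+$ (equivalently, $\bigoplus_{j\ge d_\alpha+1}\mathfrak g_\alpha(j)$ is a maximal abelian ideal of the Borel subalgebra).
   Context: For $\mu=\sum_{\beta\in\Pi}c_\beta\beta$, $\mathrm{ht}_\alpha(\mu)=c_\alpha$; $\Delta_\alpha(i)=\{\gamma\in\Delta\mid\mathrm{ht}_\alpha(\gamma)=i\}$ and $\mathfrak g_\alpha(i)$ is the corresponding sum of root spaces. An upper ideal of $\Delta^+$ is a subset $I\subset\Delta^+$ with $\gamma\in I,\nu\in\Delta^+,\nu+\gamma\in\Delta^+\Rightarrow\nu+\gamma\in I$; it is abelian if $\gamma'+\gamma''\notin\Delta^+$ for all $\gamma',\gamma''\in I$; maximality is with respect to inclusion among abelian upper ideals. *)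

theory Defs
  imports "HOL-Analysis.Analysis"
begin

definition reflect :: "'a::real_inner \<Rightarrow> 'a \<Rightarrow> 'a" where
  "reflect a v = v - ((2 * (v \<bullet> a)) / (a \<bullet> a)) *\<^sub>R a"

definition root_system :: "'a::euclidean_space set \<Rightarrow> bool" where
  "root_system R \<longleftrightarrow> finite R \<and> 0 \<notin> R \<and> span R = UNIV \<and>
     (\<forall>a\<in>R. \<forall>b\<in>R. reflect a b \<in> R) \<and>
     (\<forall>a\<in>R. \<forall>b\<in>R. 2 * (b \<bullet> a) / (a \<bullet> a) \<in> \<int>) \<and>
     (\<forall>a\<in>R. \<forall>c::real. c *\<^sub>R a \<in> R \<longrightarrow> c = 1 \<or> c = -1)"

definition irreducible_rs :: "'a::euclidean_space set \<Rightarrow> bool" where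
  "irreducible_rs R \<longleftrightarrow> R \<noteq> {} \<and> \<not> (\<exists>A B. A \<noteq> {} \<and> B \<noteq> {} \<and> A \<union> B = R \<and> A \<inter> B = {} \<and>
       (\<forall>a\<in>A. \<forall>b\<in>B. a \<bullet> b = 0))"

definition ht :: "'a::euclidean_space set \<Rightarrow> 'a \<Rightarrow> 'a \<Rightarrow> real" where
  "ht S a mu = representation S mu a"

definition is_base :: "'a::euclidean_space set \<Rightarrow> 'a set \<Rightarrow> bool" where
  "is_base R S \<longleftrightarrow> S \<subseteq> R \<and> independent S \<and> R \<subseteq> span S \<and>
     (\<forall>g\<in>R. (\<forall>b\<in>S. ht S b g \<in> \<int>) \<and>
             ((\<forall>b\<in>S. ht S b g \<ge> 0) \<or> (\<forall>b\<in>S. ht S b g \<le> 0)))"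

definition pos_roots :: "'a::euclidean_space set \<Rightarrow> 'a set \<Rightarrow> 'a set" where
  "pos_roots R S = {g\<in>R. \<forall>b\<in>S. ht S b g \<ge> 0}"

definition highest_root :: "'a::euclidean_space set \<Rightarrow> 'a set \<Rightarrow> 'a \<Rightarrow> bool" where
  "highest_root R S t \<longleftrightarrow> t \<in> R \<and> (\<forall>g\<in>R. \<forall>b\<in>S. ht S b g \<le> ht S b t)"

definition upper_ideal :: "'a::euclidean_space set \<Rightarrow> 'a set \<Rightarrow> 'a set \<Rightarrow> bool" where
  "upper_ideal R S I \<longleftrightarrow> I \<subseteq> pos_roots R S \<and>
     (\<forall>g\<in>I. \<forall>v\<in>pos_roots R S. v + g \<in> pos_roots R S \<longrightarrow> v + g \<in> I)"

definition abelian_set :: "'a::euclidean_space set \<Rightarrow> 'a set \<Rightarrow> 'a set \<Rightarrow> bool" where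
  "abelian_set R S I \<longleftrightarrow> (\<forall>g1\<in>I. \<forall>g2\<in>I. g1 + g2 \<notin> pos_roots R S)"

definition maximal_abelian_ideal :: "'a::euclidean_space set \<Rightarrow> 'a set \<Rightarrow> 'a set \<Rightarrow> bool" where
  "maximal_abelian_ideal R S I \<longleftrightarrow> upper_ideal R S I \<and> abelian_set R S I \<and>
     (\<forall>J. upper_ideal R S J \<and> abelian_set R S J \<and> I \<subseteq> J \<longrightarrow> J = I)"

end

theory Submission
  imports Defs
begin

locale rsb =
  fixes R S :: "'a::euclidean_space set"
  assumes rs: "root_system R" and base: "is_base R S"
begin

lemma finR: "finite R" and zR: "0 \<notin> R" and spanR: "span R = UNIV"
  and reflR: "\<And>a b. a \<in> R \<Longrightarrow> b \<in> R \<Longrightarrow> reflect a b \<in> R"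
  and intR: "\<And>a b. a \<in> R \<Longrightarrow> b \<in> R \<Longrightarrow> 2 * (b \<bullet> a) / (a \<bullet> a) \<in> \<int>"
  and redR: "\<And>a c. a \<in> R \<Longrightarrow> c *\<^sub>R a \<in> R \<Longrightarrow> c = 1 \<or> c = -1"
  using rs unfolding root_system_def by auto

lemma SR: "S \<subseteq> R" and indS: "independent S" and RS: "R \<subseteq> span S"
  and htint: "\<And>g b. g \<in> R \<Longrightarrow> b \<in> S \<Longrightarrow> ht S b g \<in> \<int>"
  and sgn: "\<And>g. g \<in> R \<Longrightarrow> (\<forall>b\<in>S. ht S b g \<ge> 0) \<or> (\<forall>b\<in>S. ht S b g \<le> 0)"
  using base unfolding is_base_def by auto

lemma spanS: "span S = UNIV"
  using span_minimal[OF RS subspace_span] spanR by auto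

lemma finS: "finite S"
  using indS independent_bound_general by blast

lemma ht_add: "ht S b (x + y) = ht S b x + ht S b y"
  unfolding ht_def using real_vector.representation_add[OF indS, of y x] spanS by auto

lemma ht_diff: "ht S b (x - y) = ht S b x - ht S b y"
  unfolding ht_def using real_vector.representation_diff[OF indS, of y x] spanS by auto

lemma ht_neg: "ht S b (- x) = - ht S b x"
  unfolding ht_def using real_vector.representation_neg[OF indS, of x] spanS by auto

lemma ht_scale: "ht S b (c *\<^sub>R x) = c * ht S b x"
  unfolding ht_def using real_vector.representation_scale[OF indS, of x c] spanS by auto

lemma ht_zero: "ht S b 0 = 0"
  unfolding ht_def by (simp add: real_vector.representation_zero)

lemma ht_sum: "ht S b (sum f A) = (\<Sum>x\<in>A. ht S b (f x))"
  unfolding ht_def using real_vector.representation_sum[OF indS, of A f] spanS by auto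

lemma ht_simple: "c \<in> S \<Longrightarrow> ht S b c = (if b = c then 1 else 0)"
  unfolding ht_def using real_vector.representation_basis[OF indS] by auto

lemma expand: "(\<Sum>b\<in>S. ht S b x *\<^sub>R b) = x"
  unfolding ht_def using real_vector.sum_representation_eq[OF indS, of x S] spanS finS by auto

lemma inner_expand: "y \<bullet> x = (\<Sum>b\<in>S. ht S b x * (y \<bullet> b))"
proof -
  have "y \<bullet> x = y \<bullet> (\<Sum>b\<in>S. ht S b x *\<^sub>R b)" using expand by simp
  also have "\<dots> = (\<Sum>b\<in>S. ht S b x * (y \<bullet> b))"
    by (simp add: inner_sum_right)
  finally show ?thesis .
qed

lemma negR: "g \<in> R \<Longrightarrow> - g \<in> R"
proof -
  assume g: "g \<in> R"
  have "g \<bullet> g \<noteq> 0" using g zR by auto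
  then have "reflect g g = - g" unfolding reflect_def by (simp add: scaleR_2)
  then show ?thesis using reflR[OF g g] by simp
qed

lemma root_diff:
  assumes a: "x \<in> R" and b: "y \<in> R" and pos: "x \<bullet> y > 0" and ne: "x \<noteq> y"
  shows "x - y \<in> R"
proof -
  have xx: "x \<bullet> x > 0" using a zR by (metis inner_gt_zero_iff)
  have yy: "y \<bullet> y > 0" using b zR by (metis inner_gt_zero_iff)
  obtain m where m: "2 * (x \<bullet> y) / (y \<bullet> y) = of_int m" using intR[OF b a] Ints_cases by metis
  obtain n where n: "2 * (y \<bullet> x) / (x \<bullet> x) = of_int n" using intR[OF a b] Ints_cases by metis
  have "2 * (x \<bullet> y) / (y \<bullet> y) > 0" using pos yy by simp
  then have mpos: "m > 0" using m by simp
  have "2 * (y \<bullet> x) / (x \<bullet> x) > 0" using pos xx by (simp add: inner_commute)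
  then have npos: "n > 0" using n by simp
  have cs: "(x \<bullet> y)^2 < (x \<bullet> x) * (y \<bullet> y)"
  proof -
    have le: "\<bar>x \<bullet> y\<bar> \<le> norm x * norm y" by (rule Cauchy_Schwarz_ineq2)
    have neq: "\<bar>x \<bullet> y\<bar> \<noteq> norm x * norm y"
    proof
      assume eq: "\<bar>x \<bullet> y\<bar> = norm x * norm y"
      have nx: "norm x > 0" using a zR by auto
      have "norm x *\<^sub>R y = norm y *\<^sub>R x \<or> norm x *\<^sub>R y = - norm y *\<^sub>R x"
        using eq norm_cauchy_schwarz_abs_eq by blast
      moreover have "\<And>w. norm x *\<^sub>R y = w \<Longrightarrow> y = (1 / norm x) *\<^sub>R w"
        using nx by auto
      ultimately obtain c where c: "y = c *\<^sub>R x"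
        by (metis scaleR_scaleR)
      have "c = 1 \<or> c = -1" using redR[OF a] c b by auto
      then show False
      proof
        assume "c = 1" then show False using c ne by simp
      next
        assume "c = -1" then have "x \<bullet> y = - (x \<bullet> x)" using c by simp
        then show False using pos xx by simp
      qed
    qed
    have "\<bar>x \<bullet> y\<bar> < norm x * norm y" using le neq by simp
    then have "\<bar>x \<bullet> y\<bar>^2 < (norm x * norm y)^2"
      by (intro power_strict_mono) auto
    then show ?thesis by (simp add: power_mult_distrib power2_norm_eq_inner)
  qed
  have "real_of_int (m * n) = (2 * (x \<bullet> y) / (y \<bullet> y)) * (2 * (x \<bullet> y) / (x \<bullet> x))"
    using m n by (simp add: inner_commute)
  also have "\<dots> = 4 * (x \<bullet> y)^2 / ((x \<bullet> x) * (y \<bullet> y))"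
    using xx yy by (simp add: power2_eq_square field_simps)
  also have "\<dots> < 4" using cs xx yy by (simp add: field_simps)
  finally have "real_of_int (m * n) < real_of_int 4" by simp
  then have "m * n < 4" by (simp only: of_int_less_iff)
  moreover have "m \<ge> 2 \<Longrightarrow> n \<ge> 2 \<Longrightarrow> m * n \<ge> 2 * 2"
    by (rule mult_mono) auto
  ultimately have "m = 1 \<or> n = 1" using mpos npos by linarith
  then show ?thesis
  proof
    assume "m = 1"
    then have "reflect y x = x - y" using m pos unfolding reflect_def by simp
    then show ?thesis using reflR[OF b a] by simp
  next
    assume "n = 1"
    then have "reflect x y = y - x" using n pos unfolding reflect_def by (simp add: inner_commute)
    then show ?thesis using negR reflR[OF a b] by fastforce
  qed
qed

lemma root_sum:
  assumes a: "x \<in> R" and b: "y \<in> R" and neg: "x \<bullet> y < 0" and ne: "x \<noteq> - y"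
  shows "x + y \<in> R"
  using root_diff[OF a negR[OF b]] neg ne by simp

lemma pos_def': "g \<in> pos_roots R S \<longleftrightarrow> g \<in> R \<and> (\<forall>b\<in>S. ht S b g \<ge> 0)"
  unfolding pos_roots_def by auto

lemma pos_ne_neg: "g \<in> pos_roots R S \<Longrightarrow> b \<in> S \<Longrightarrow> g \<noteq> - b"
proof
  assume g: "g \<in> pos_roots R S" and b: "b \<in> S" and e: "g = - b"
  have "ht S b g = -1" using e ht_neg ht_simple[OF b] by simp
  then show False using g b unfolding pos_def' by fastforce
qed

lemma simple_pos: "b \<in> S \<Longrightarrow> b \<in> pos_roots R S"
  unfolding pos_def' using SR ht_simple by auto

lemma pos_add: "x \<in> pos_roots R S \<Longrightarrow> y \<in> pos_roots R S \<Longrightarrow> x + y \<in> R \<Longrightarrow> x + y \<in> pos_roots R S"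
  unfolding pos_def' by (auto simp: ht_add)

lemma refl_inv: assumes "b \<noteq> 0" shows "reflect b (reflect b v) = v"
proof -
  have bb: "b \<bullet> b \<noteq> 0" using assms by simp
  have "reflect b (reflect b v) = reflect b v - (2 * (reflect b v \<bullet> b) / (b \<bullet> b)) *\<^sub>R b"
    by (rule reflect_def)
  also have "reflect b v \<bullet> b = - (v \<bullet> b)"
    unfolding reflect_def using bb by (simp add: inner_diff_left)
  finally have "reflect b (reflect b v) = reflect b v + (2 * (v \<bullet> b) / (b \<bullet> b)) *\<^sub>R b"
    by simp
  also have "\<dots> = v" unfolding reflect_def[of b v] by simp
  finally show ?thesis .
qed

end

locale hsetup = rsb +
  fixes t a :: "'a::euclidean_space" and d :: nat
  assumes hr: "highest_root R S t" and aS: "a \<in> S" and hta: "ht S a t = 2 * real d + 1"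
begin

lemma tR: "t \<in> R" and tmax: "\<And>g b. g \<in> R \<Longrightarrow> b \<in> S \<Longrightarrow> ht S b g \<le> ht S b t"
  using hr unfolding highest_root_def by auto

lemma aR: "a \<in> R" using aS SR by auto

lemma level_pos: assumes "g \<in> R" "ht S a g > 0" shows "g \<in> pos_roots R S"
  using sgn[OF assms(1)] assms aS unfolding pos_def' by force

lemma tpos: "t \<in> pos_roots R S"
  using level_pos[OF tR] hta by simp

lemma dom_t: assumes b: "b \<in> S" shows "t \<bullet> b \<ge> 0"
proof (rule ccontr)
  assume "\<not> t \<bullet> b \<ge> 0"
  then have "t \<bullet> b < 0" by simp
  moreover have "t \<noteq> - b" using pos_ne_neg[OF tpos b] .
  ultimately have "t + b \<in> R" using root_sum[OF tR] b SR by auto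
  then have "ht S b (t + b) \<le> ht S b t" using tmax b by blast
  then show False using ht_add ht_simple[OF b] by simp
qed

lemma dom_pos: assumes p: "x \<in> pos_roots R S" and dom: "\<forall>b\<in>S. x \<bullet> b \<ge> 0"
  shows "x \<bullet> t > 0"
proof -
  have xR: "x \<in> R" using p unfolding pos_def' by auto
  have "x \<noteq> 0" using xR zR by auto
  then have xx: "x \<bullet> x > 0" by simp
  have "x \<bullet> (t - x) = (\<Sum>b\<in>S. ht S b (t - x) * (x \<bullet> b))" by (rule inner_expand)
  also have "\<dots> \<ge> 0"
    by (rule sum_nonneg) (use dom tmax[OF xR] in \<open>auto simp: ht_diff\<close>)
  finally have "x \<bullet> (t - x) \<ge> 0" .
  moreover have "x \<bullet> t = x \<bullet> x + x \<bullet> (t - x)" by (simp add: inner_diff_right)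
  ultimately show ?thesis using xx by linarith
qed

definition T where "T = {v \<in> R. ht S a v = ht S a t}"
definition z where "z = (\<Sum>v\<in>T. v)"

lemma finT: "finite T" unfolding T_def using finR by auto
lemma tT: "t \<in> T" unfolding T_def using tR by auto

lemma z_orth: assumes b: "b \<in> S" and ba: "b \<noteq> a" shows "z \<bullet> b = 0"
proof -
  have bR: "b \<in> R" using b SR by auto
  have b0: "b \<noteq> 0" using bR zR by auto
  have hb: "ht S a (reflect b v) = ht S a v" for v
    unfolding reflect_def using ht_simple[OF b] ba by (simp add: ht_diff ht_scale)
  have maps: "reflect b \<in> T \<rightarrow> T"
    unfolding T_def using hb reflR[OF bR] by auto
  have bij: "bij_betw (reflect b) T T"
    by (rule bij_betwI[OF maps maps]) (simp_all add: refl_inv[OF b0])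
  have "(\<Sum>v\<in>T. reflect b v) = (\<Sum>v\<in>T. v)"
    using sum.reindex_bij_betw[OF bij, of "\<lambda>v. v"] by simp
  moreover have "(\<Sum>v\<in>T. reflect b v) = z - (2 * (z \<bullet> b) / (b \<bullet> b)) *\<^sub>R b"
  proof -
    have c: "(\<Sum>v\<in>T. 2 * (v \<bullet> b) / (b \<bullet> b)) = 2 * (z \<bullet> b) / (b \<bullet> b)"
      unfolding z_def inner_sum_left sum_divide_distrib[symmetric] sum_distrib_left[symmetric] ..
    have "(\<Sum>v\<in>T. reflect b v) = (\<Sum>v\<in>T. v - (2 * (v \<bullet> b) / (b \<bullet> b)) *\<^sub>R b)"
      unfolding reflect_def ..
    also have "\<dots> = z - (\<Sum>v\<in>T. (2 * (v \<bullet> b) / (b \<bullet> b)) *\<^sub>R b)"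
      unfolding z_def by (rule sum_subtractf)
    also have "(\<Sum>v\<in>T. (2 * (v \<bullet> b) / (b \<bullet> b)) *\<^sub>R b) = (\<Sum>v\<in>T. 2 * (v \<bullet> b) / (b \<bullet> b)) *\<^sub>R b"
      by (rule scaleR_sum_left[symmetric])
    finally show ?thesis unfolding c .
  qed
  ultimately have "(2 * (z \<bullet> b) / (b \<bullet> b)) *\<^sub>R b = 0" unfolding z_def by simp
  then show ?thesis using b0 by simp
qed

lemma z_inner: "z \<bullet> x = ht S a x * (z \<bullet> a)"
proof -
  have "z \<bullet> x = (\<Sum>b\<in>S. ht S b x * (z \<bullet> b))" by (rule inner_expand)
  also have "\<dots> = ht S a x * (z \<bullet> a) + (\<Sum>b\<in>S - {a}. ht S b x * (z \<bullet> b))"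
    by (rule sum.remove[OF finS aS])
  also have "(\<Sum>b\<in>S - {a}. ht S b x * (z \<bullet> b)) = 0"
    by (rule sum.neutral) (auto simp: z_orth)
  finally show ?thesis by simp
qed

lemma za: "z \<bullet> a > 0"
proof -
  have "ht S a z = (\<Sum>v\<in>T. ht S a v)" unfolding z_def by (rule ht_sum)
  also have "\<dots> = (\<Sum>v\<in>T. ht S a t)" by (rule sum.cong) (auto simp: T_def)
  also have "\<dots> = real (card T) * ht S a t" by simp
  finally have hz: "ht S a z = real (card T) * ht S a t" .
  have "card T > 0" using finT tT card_gt_0_iff by auto
  then have hzp: "ht S a z > 0" using hz hta by simp
  then have "z \<noteq> 0" using ht_zero by auto
  then have "z \<bullet> z > 0" by simp
  then have "ht S a z * (z \<bullet> a) > 0" by (simp only: z_inner[of z, symmetric])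
  then show ?thesis using hzp by (simp add: zero_less_mult_iff)
qed

lemma exists_top: assumes "ht S a x > 0"
  shows "\<exists>v\<in>R. ht S a v = ht S a t \<and> v \<bullet> x > 0"
proof (rule ccontr)
  assume "\<not> ?thesis"
  then have "\<forall>v\<in>T. v \<bullet> x \<le> 0" unfolding T_def by auto
  then have "(\<Sum>v\<in>T. v \<bullet> x) \<le> 0" by (intro sum_nonpos) auto
  moreover have "(\<Sum>v\<in>T. v \<bullet> x) = z \<bullet> x" unfolding z_def by (simp add: inner_sum_left)
  moreover have "z \<bullet> x > 0" unfolding z_inner[of x] using za assms by simp
  ultimately show False by simp
qed

definition I where "I = {g \<in> R. ht S a g \<ge> real d + 1}"

lemma I_upper: "upper_ideal R S I"
  unfolding upper_ideal_def
proof
  show "I \<subseteq> pos_roots R S" unfolding I_def using level_pos by auto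
  show "\<forall>g\<in>I. \<forall>v\<in>pos_roots R S. v + g \<in> pos_roots R S \<longrightarrow> v + g \<in> I"
  proof (intro ballI impI)
    fix g v assume g: "g \<in> I" and v: "v \<in> pos_roots R S" and vg: "v + g \<in> pos_roots R S"
    have "ht S a v \<ge> 0" using v aS unfolding pos_def' by auto
    then show "v + g \<in> I" using g vg unfolding I_def pos_def' by (auto simp: ht_add)
  qed
qed

lemma I_abelian: "abelian_set R S I"
  unfolding abelian_set_def
proof (intro ballI notI)
  fix g1 g2 assume "g1 \<in> I" "g2 \<in> I" "g1 + g2 \<in> pos_roots R S"
  then have "g1 + g2 \<in> R" "ht S a (g1 + g2) \<ge> 2 * real d + 2"
    unfolding I_def pos_def' by (auto simp: ht_add)
  then show False using tmax[OF _ aS] hta by fastforce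
qed

lemma I_max:
  assumes up: "upper_ideal R S J" and ab: "abelian_set R S J" and IJ: "I \<subseteq> J"
  shows "J \<subseteq> I"
proof
  have bad: "\<And>x y. x \<in> J \<Longrightarrow> y \<in> J \<Longrightarrow> x + y \<in> pos_roots R S \<Longrightarrow> False"
    using ab unfolding abelian_set_def by blast
  have upc: "\<And>g v. g \<in> J \<Longrightarrow> v \<in> pos_roots R S \<Longrightarrow> v + g \<in> pos_roots R S \<Longrightarrow> v + g \<in> J"
    using up unfolding upper_ideal_def by blast
  have Jpos: "\<And>g. g \<in> J \<Longrightarrow> g \<in> pos_roots R S"
    using up unfolding upper_ideal_def by blast
  have JR: "\<And>g. g \<in> J \<Longrightarrow> g \<in> R" using Jpos unfolding pos_def' by blast
  have inJ: "\<And>v. v \<in> R \<Longrightarrow> ht S a v \<ge> real d + 1 \<Longrightarrow> v \<in> J"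
    using IJ unfolding I_def by blast
  have claimA: False if dJ: "\<delta> \<in> J" and h1: "ht S a \<delta> > 0" and h2: "ht S a \<delta> \<le> real d" for \<delta>
  proof -
    obtain v where vR: "v \<in> R" and hv: "ht S a v = ht S a t" and pv: "v \<bullet> \<delta> > 0"
      using exists_top[OF h1] by blast
    have "v \<noteq> \<delta>" using hv hta h2 by auto
    then have vd: "v - \<delta> \<in> R" using root_diff[OF vR JR[OF dJ] pv] by simp
    have "ht S a (v - \<delta>) \<ge> real d + 1" using hv hta h2 by (simp add: ht_diff)
    then have "v - \<delta> \<in> J" using inJ vd by blast
    moreover have "\<delta> + (v - \<delta>) \<in> pos_roots R S" using level_pos[OF vR] hv hta by simp
    ultimately show False using bad dJ by blast
  qed
  have claimB: False if dJ: "\<delta>0 \<in> J" and h0: "ht S a \<delta>0 = 0" for \<delta>0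
  proof -
    define X where "X = {g \<in> J. ht S a g = 0}"
    define h where "h = (\<lambda>g. \<Sum>b\<in>S. ht S b g)"
    have finX: "finite X" unfolding X_def using JR finR by (auto intro: finite_subset)
    have neX: "X \<noteq> {}" unfolding X_def using dJ h0 by auto
    have "Max (h ` X) \<in> h ` X" using finX neX by (intro Max_in) auto
    then obtain \<delta> where dX: "\<delta> \<in> X" and hm: "h \<delta> = Max (h ` X)" by auto
    have dmax: "h y \<le> h \<delta>" if "y \<in> X" for y
      unfolding hm using finX that by (intro Max_ge) auto
    have dJ': "\<delta> \<in> J" and hd0: "ht S a \<delta> = 0" using dX unfolding X_def by auto
    have dpos: "\<delta> \<in> pos_roots R S" using Jpos[OF dJ'] .
    have dR: "\<delta> \<in> R" using JR[OF dJ'] .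
    have dom_other: "\<delta> \<bullet> j \<ge> 0" if j: "j \<in> S" and ja: "j \<noteq> a" for j
    proof (rule ccontr)
      assume "\<not> \<delta> \<bullet> j \<ge> 0"
      then have "\<delta> \<bullet> j < 0" by simp
      then have sR: "\<delta> + j \<in> R" using root_sum[OF dR] j SR pos_ne_neg[OF dpos j] by auto
      have sp: "\<delta> + j \<in> pos_roots R S" using pos_add[OF dpos simple_pos[OF j] sR] .
      have "j + \<delta> \<in> J" using upc[OF dJ' simple_pos[OF j]] sp by (simp add: add.commute)
      moreover have "ht S a (\<delta> + j) = 0" using hd0 ht_simple[OF j] ja by (simp add: ht_add)
      ultimately have "\<delta> + j \<in> X" unfolding X_def by (simp add: add.commute)
      then have "h (\<delta> + j) \<le> h \<delta>" by (rule dmax)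
      moreover have "h (\<delta> + j) = h \<delta> + 1"
        unfolding h_def using j finS by (simp add: ht_add sum.distrib ht_simple[OF j] sum.delta')
      ultimately show False by simp
    qed
    show False
    proof (cases "\<delta> \<bullet> a \<ge> 0")
      case True
      then have "\<forall>b\<in>S. \<delta> \<bullet> b \<ge> 0" using dom_other by blast
      then have pt: "\<delta> \<bullet> t > 0" using dom_pos[OF dpos] by blast
      have "\<delta> \<noteq> t" using hd0 hta by auto
      then have "t - \<delta> \<in> R" using root_diff[OF tR dR] pt by (simp add: inner_commute)
      moreover have "ht S a (t - \<delta>) \<ge> real d + 1" using hd0 hta by (simp add: ht_diff)
      ultimately have "t - \<delta> \<in> J" using inJ by blast
      moreover have "\<delta> + (t - \<delta>) \<in> pos_roots R S" using tpos by simp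
      ultimately show False using bad dJ' by blast
    next
      case False
      then have "\<delta> \<bullet> a < 0" by simp
      then have sR: "\<delta> + a \<in> R" using root_sum[OF dR aR] pos_ne_neg[OF dpos aS] by auto
      have sp: "\<delta> + a \<in> pos_roots R S" using pos_add[OF dpos simple_pos[OF aS] sR] .
      have hs: "ht S a (\<delta> + a) = 1" using hd0 ht_simple[OF aS] by (simp add: ht_add)
      show False
      proof (cases "d = 0")
        case True
        have "a \<in> J" using inJ[OF aR] ht_simple[OF aS] True by simp
        then show False using bad[OF dJ'] sp by blast
      next
        case False
        have "a + \<delta> \<in> J" using upc[OF dJ' simple_pos[OF aS]] sp by (simp add: add.commute)
        then have "\<delta> + a \<in> J" by (simp add: add.commute)
        moreover have "real d \<ge> 1" using False by simp
        ultimately show False using claimA[of "\<delta> + a"] hs by simp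
      qed
    qed
  qed
  fix g assume gJ: "g \<in> J"
  show "g \<in> I"
  proof (rule ccontr)
    assume nI: "g \<notin> I"
    have gR: "g \<in> R" using JR[OF gJ] .
    have lt: "ht S a g < real d + 1" using nI gR unfolding I_def by auto
    have ge: "ht S a g \<ge> 0" using Jpos[OF gJ] aS unfolding pos_def' by auto
    obtain k where k: "ht S a g = of_int k" using htint[OF gR aS] Ints_cases by metis
    show False
    proof (cases "k = 0")
      case True then show False using claimB[OF gJ] k by simp
    next
      case False
      then have "k \<ge> 1" "k \<le> int d" using ge lt k by linarith+
      then show False using claimA[OF gJ] k by simp
    qed
  qed
qed

end

theorem proposition3p8:
  fixes R S :: "'a::euclidean_space set" and t a :: 'a and d :: nat
  assumes "root_system R" and "irreducible_rs R"
    and "is_base R S" and "highest_root R S t"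
    and "a \<in> S" and "ht S a t = 2 * real d + 1"
  shows "maximal_abelian_ideal R S {g \<in> R. ht S a g \<ge> real d + 1}"
proof -
  interpret hsetup R S t a d
    using assms by unfold_locales auto
  show ?thesis
    using I_upper I_abelian I_max unfolding maximal_abelian_ideal_def I_def by blast
qed

end
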